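(* As formal power series in $x, y, z$, $$\sum_{p,q,k \ge 0} u((p,q),k)\, x^p y^q z^k \;=\; \frac{1}{1-(1+z)(x+y-xy)}.$$
   Context: Let $\mathbb{N} = \{0,1,2,\dots\}$. For $(p,q) \in \mathbb{N}^2$ and $n \in \mathbb{N}$, an unrestricted generalized jump path of length $n$ starting at $(p,q)$ is a sequence $(x_0, \dots, x_n)$ of points of $\mathbb{N}^2$ satisfying three conditions: - $x_0 = (p,q)$; - for every $i$, each coordinate of $x_{i+1}$ is at most the corresponding coordinate of $x_i$; - $x_{i+1} \ne x_i$ for every $i$. Let $u((p,q),n)$ denote the number of such paths. *)

theory Defs
  imports "HOL-Computational_Algebra.Formal_Power_Series"
begin

definition jump_paths :: "nat \<times> nat \<Rightarrow> nat \<Rightarrow> (nat \<times> nat) list set" where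
  "jump_paths s n = {xs. length xs = n + 1 \<and> xs ! 0 = s \<and>
     (\<forall>i<n. fst (xs ! (i+1)) \<le> fst (xs ! i) \<and> snd (xs ! (i+1)) \<le> snd (xs ! i)
            \<and> xs ! (i+1) \<noteq> xs ! i)}"

definition u :: "nat \<times> nat \<Rightarrow> nat \<Rightarrow> nat" where
  "u s n = card (jump_paths s n)"

(* Trivariate formal power series in x, y, z over int, encoded as
   ((int fps) fps) fps: outer variable z, middle variable y, inner variable x. *)
definition fX :: "int fps fps fps" where "fX = fps_const (fps_const fps_X)"
definition fY :: "int fps fps fps" where "fY = fps_const fps_X"
definition fZ :: "int fps fps fps" where "fZ = fps_X"

definition jump_gf :: "int fps fps fps" where
  "jump_gf = Abs_fps (\<lambda>k. Abs_fps (\<lambda>q. Abs_fps (\<lambda>p. int (u (p, q) k))))"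

end

theory Submission imports Defs begin

definition below :: "nat \<times> nat \<Rightarrow> (nat \<times> nat) set" where
  "below s = {t. fst t \<le> fst s \<and> snd t \<le> snd s \<and> t \<noteq> s}"

lemma jp0: "jump_paths s 0 = {[s]}"
  unfolding jump_paths_def by (auto simp: length_Suc_conv)

lemma jpSuc: "jump_paths s (Suc k) = (\<Union>t\<in>below s. (#) s ` jump_paths t k)"
proof (intro equalityI subsetI)
  fix xs assume "xs \<in> jump_paths s (Suc k)"
  hence L: "length xs = Suc k + 1" and h: "xs ! 0 = s" and
    st: "\<forall>i<Suc k. fst (xs ! (i+1)) \<le> fst (xs ! i) \<and> snd (xs ! (i+1)) \<le> snd (xs ! i)
            \<and> xs ! (i+1) \<noteq> xs ! i" by (auto simp: jump_paths_def)
  then obtain ys where xs: "xs = s # ys" and Ly: "length ys = Suc k"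
    by (cases xs) auto
  have "ys ! 0 \<in> below s" using st[rule_format, of 0] by (auto simp: below_def xs)
  moreover have "ys \<in> jump_paths (ys ! 0) k"
    unfolding jump_paths_def using Ly st xs by auto
  ultimately show "xs \<in> (\<Union>t\<in>below s. (#) s ` jump_paths t k)" using xs by blast
next
  fix xs assume "xs \<in> (\<Union>t\<in>below s. (#) s ` jump_paths t k)"
  then obtain t ys where t: "t \<in> below s" and ys: "ys \<in> jump_paths t k" and xs: "xs = s # ys" by blast
  show "xs \<in> jump_paths s (Suc k)"
    unfolding jump_paths_def
  proof (intro CollectI conjI allI impI)
    show "length xs = Suc k + 1" using ys xs by (simp add: jump_paths_def)
    show "xs ! 0 = s" using xs by simp
    fix i assume i: "i < Suc k"
    have "fst (xs ! (i+1)) \<le> fst (xs ! i) \<and> snd (xs ! (i+1)) \<le> snd (xs ! i) \<and> xs ! (i+1) \<noteq> xs ! i"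
    proof (cases i)
      case 0 thus ?thesis using t ys xs by (auto simp: below_def jump_paths_def)
    next
      case (Suc j) thus ?thesis using ys xs i by (auto simp: jump_paths_def)
    qed
    thus "fst (xs ! (i+1)) \<le> fst (xs ! i)" "snd (xs ! (i+1)) \<le> snd (xs ! i)" "xs ! (i+1) \<noteq> xs ! i"
      by auto
  qed
qed

lemma below_finite: "finite (below s)"
proof -
  have "below s \<subseteq> {0..fst s} \<times> {0..snd s}" by (auto simp: below_def)
  thus ?thesis by (rule finite_subset) auto
qed

lemma jp_finite: "finite (jump_paths s k)"
  by (induction k arbitrary: s) (auto simp: jp0 jpSuc below_finite)

lemma jp_hd: "xs \<in> jump_paths t k \<Longrightarrow> xs ! 0 = t"
  by (simp add: jump_paths_def)

lemma u0: "u s 0 = 1" by (simp add: u_def jp0)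

lemma uSuc: "u s (Suc k) = (\<Sum>t\<in>below s. u t k)"
proof -
  have "u s (Suc k) = (\<Sum>t\<in>below s. card ((#) s ` jump_paths t k))"
    unfolding u_def jpSuc
    apply (rule card_UN_disjoint)
    apply (auto simp: below_finite jp_finite)
    apply (metis jp_hd prod.inject)+
    done
  also have "\<dots> = (\<Sum>t\<in>below s. u t k)"
    by (rule sum.cong) (auto simp: u_def card_image)
  finally show ?thesis .
qed

lemma below_eq: "below (p,q) = ({0..p} \<times> {0..q}) - {(p,q)}"
  by (auto simp: below_def)

definition S :: "nat \<Rightarrow> nat \<Rightarrow> nat \<Rightarrow> int" where
  "S k p q = (\<Sum>i\<le>p. \<Sum>j\<le>q. int (u (i,j) k))"

lemma uSuc': "int (u (p,q) (Suc k)) = S k p q - int (u (p,q) k)"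
proof -
  have "int (u (p,q) (Suc k)) = (\<Sum>t\<in>({0..p} \<times> {0..q}) - {(p,q)}. int (u t k))"
    by (simp add: uSuc below_eq)
  also have "\<dots> = (\<Sum>t\<in>{0..p} \<times> {0..q}. int (u t k)) - int (u (p,q) k)"
    by (subst sum_diff1) auto
  also have "(\<Sum>t\<in>{0..p} \<times> {0..q}. int (u t k)) = S k p q"
    unfolding S_def by (simp add: sum.cartesian_product atMost_atLeast0)
  finally show ?thesis .
qed

lemma S_Suc: "S k (Suc p) q = S k p q + (\<Sum>j\<le>q. int (u (Suc p,j) k))"
  by (simp add: S_def)

lemma S_rows: "(\<Sum>j\<le>Suc q. f j) = (\<Sum>j\<le>q. f j) + (f (Suc q) :: int)"
  by simp

lemma DS_00: "S k 0 0 = int (u (0,0) k)" by (simp add: S_def)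
lemma DS_p0: "S k (Suc p) 0 - S k p 0 = int (u (Suc p,0) k)" by (simp add: S_def)
lemma DS_0q: "S k 0 (Suc q) - S k 0 q = int (u (0,Suc q) k)" by (simp add: S_def)
lemma DS_pq: "S k (Suc p) (Suc q) - S k p (Suc q) - S k (Suc p) q + S k p q = int (u (Suc p,Suc q) k)"
  by (simp add: S_def)

definition g :: "nat \<Rightarrow> nat \<Rightarrow> nat \<Rightarrow> int" where "g k p q = int (u (p,q) k)"

definition W :: "nat \<Rightarrow> nat \<Rightarrow> nat \<Rightarrow> int" where
  "W k p q = (if p>0 then g k (p-1) q else 0) + (if q>0 then g k p (q-1) else 0)
            - (if p>0 \<and> q>0 then g k (p-1) (q-1) else 0)"

lemma key: "g k p q - W k p q - (if k>0 then W (k-1) p q else 0) = (if p=0 \<and> q=0 \<and> k=0 then 1 else 0)"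
proof (cases k)
  case 0 thus ?thesis by (simp add: W_def g_def u0)
next
  case (Suc k')
  show ?thesis
  proof (cases p; cases q)
    show ?thesis if "p = 0" "q = 0" using that Suc by (simp add: W_def g_def uSuc' DS_00)
  next
    fix q' show ?thesis if "p = 0" "q = Suc q'" using that Suc DS_0q[of k' q']
      by (simp add: W_def g_def uSuc')
  next
    fix p' show ?thesis if "p = Suc p'" "q = 0" using that Suc DS_p0[of k' p']
      by (simp add: W_def g_def uSuc')
  next
    fix p' q' show ?thesis if "p = Suc p'" "q = Suc q'" using that Suc DS_pq[of k' p' q']
      by (simp add: W_def g_def uSuc')
  qed
qed

lemma Hc: fixes H :: "int fps fps" shows "fps_nth (fps_nth (H * (fps_const fps_X + fps_X - fps_const fps_X * fps_X)) q) p =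
   (if p > 0 then fps_nth (fps_nth H q) (p-1) else 0) + (if q > 0 then fps_nth (fps_nth H (q-1)) p else 0)
   - (if p>0 \<and> q>0 then fps_nth (fps_nth H (q-1)) (p-1) else 0)"
proof -
  have "H * (fps_const fps_X + fps_X - fps_const fps_X * fps_X) =
        H * fps_const fps_X + H * fps_X - (H * fps_const fps_X) * fps_X"
    by (simp add: algebra_simps)
  thus ?thesis by (simp add: mult.commute[of _ fps_X])
qed

lemma G_nth: "fps_nth (fps_nth (fps_nth jump_gf k) q) p = g k p q" by (simp add: jump_gf_def g_def)

theorem mainTheorem5:
  shows "jump_gf * (1 - (1 + fZ) * (fX + fY - fX * fY)) = 1"
proof -
  define c :: "int fps fps" where "c = fps_const fps_X + fps_X - fps_const fps_X * fps_X"
  have e: "fX + fY - fX * fY = fps_const c" by (simp add: fX_def fY_def c_def)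
  have e2: "jump_gf * (1 - (1 + fZ) * fps_const c) = jump_gf - jump_gf * fps_const c - fps_X * (jump_gf * fps_const c)"
    by (simp add: fZ_def algebra_simps)
  have cW: "fps_nth (fps_nth (fps_nth jump_gf k * c) q) p = W k p q" for k q p
    unfolding c_def Hc by (simp add: W_def G_nth)
  show ?thesis
    unfolding e e2
  proof (rule fps_ext, rule fps_ext, rule fps_ext)
    fix k q p
    show "fps_nth (fps_nth (fps_nth (jump_gf - jump_gf * fps_const c - fps_X * (jump_gf * fps_const c)) k) q) p = fps_nth (fps_nth (fps_nth 1 k) q) p"
      using key[of k p q]
      by (cases k) (simp_all add: cW G_nth)
  qed
qed

end
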